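(* Let $\mathbb{K}$ be an algebraically closed field of characteristic zero, $Y$ an irreducible affine variety and $X=Y\times\mathbb{A}^1$. Let $V\subseteq Y$ be a nonempty closed rigid subset such that $V\times\mathbb{A}^1\subseteq X$ is $\mathrm{SAut}(X)$-invariant. Then $Y$ is of type B or C, i.e. $\mathrm{HD}^*(X)\neq\mathbb{K}[X]$.
   Context: A derivation is locally nilpotent (LND) if every element is killed by some power of it; a closed subset $V$ is rigid if its coordinate ring $\mathbb{K}[V]$ admits no nonzero LND. Each LND $\partial$ of $\mathbb{K}[X]$ defines a $\mathbb{G}_a$-subgroup $\{\exp(s\partial)\}$ of $\mathrm{Aut}(X)$; $\mathrm{SAut}(X)$ is the subgroup generated by all of them. A slice of an LND $\partial$ is $s$ with $\partial(s)=1$; $\mathrm{HD}^*(X)$ is the subalgebra of $\mathbb{K}[X]$ generated by kernels of all LNDs of $\mathbb{K}[X]$ having a slice. $Y$ is of type A if $\mathrm{HD}^*(X)=\mathbb{K}[X]$, type B if $\mathrm{HD}^*(X)$ is not finitely generated, type C if $Y$ is rigid and $\mathrm{HD}^*(X)=\mathbb{K}[Y]$; every $Y$ has exactly one type. *)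

theory Defs
  imports "HOL-Computational_Algebra.Polynomial"
begin

text \<open>Algebraic (coordinate-ring) model. A K-algebra is a commutative ring B together
  with a ring homomorphism c from the field K into B (the structure map).\<close>

definition alg_closed_field :: "'k::field itself \<Rightarrow> bool" where
  "alg_closed_field _ \<longleftrightarrow> (\<forall>p::'k poly. degree p > 0 \<longrightarrow> (\<exists>x. poly p x = 0))"

definition K_structure :: "('k::field \<Rightarrow> 'b::comm_ring_1) \<Rightarrow> bool" where
  "K_structure c \<longleftrightarrow> c 1 = 1 \<and> (\<forall>a b. c (a + b) = c a + c b) \<and> (\<forall>a b. c (a * b) = c a * c b)"

inductive_set alg_gen :: "('k \<Rightarrow> 'b::comm_ring_1) \<Rightarrow> 'b set \<Rightarrow> 'b set"
  for c :: "'k \<Rightarrow> 'b" and G :: "'b set" where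
  scalar: "c a \<in> alg_gen c G"
| gen: "g \<in> G \<Longrightarrow> g \<in> alg_gen c G"
| add: "x \<in> alg_gen c G \<Longrightarrow> y \<in> alg_gen c G \<Longrightarrow> x + y \<in> alg_gen c G"
| mult: "x \<in> alg_gen c G \<Longrightarrow> y \<in> alg_gen c G \<Longrightarrow> x * y \<in> alg_gen c G"

definition finitely_generated_alg :: "('k \<Rightarrow> 'b::comm_ring_1) \<Rightarrow> bool" where
  "finitely_generated_alg c \<longleftrightarrow> (\<exists>G. finite G \<and> alg_gen c G = UNIV)"

definition is_derivation :: "('k \<Rightarrow> 'b::comm_ring_1) \<Rightarrow> ('b \<Rightarrow> 'b) \<Rightarrow> bool" where
  "is_derivation c D \<longleftrightarrow>
     (\<forall>x y. D (x + y) = D x + D y) \<and>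
     (\<forall>a x. D (c a * x) = c a * D x) \<and>
     (\<forall>x y. D (x * y) = x * D y + y * D x)"

definition is_LND :: "('k \<Rightarrow> 'b::comm_ring_1) \<Rightarrow> ('b \<Rightarrow> 'b) \<Rightarrow> bool" where
  "is_LND c D \<longleftrightarrow> is_derivation c D \<and> (\<forall>x. \<exists>n. (D ^^ n) x = 0)"

definition rigid :: "('k \<Rightarrow> 'b::comm_ring_1) \<Rightarrow> bool" where
  "rigid c \<longleftrightarrow> (\<forall>D. is_LND c D \<longrightarrow> D = (\<lambda>_. 0))"

definition HD_star :: "('k \<Rightarrow> 'b::comm_ring_1) \<Rightarrow> 'b set" where
  "HD_star c = alg_gen c (\<Union>{ {x. D x = 0} | D. is_LND c D \<and> (\<exists>s. D s = 1)})"

text \<open>exp(s D) applied to f (finite sum since D is locally nilpotent).\<close>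
definition lnd_exp :: "('k::field_char_0 \<Rightarrow> 'b::comm_ring_1) \<Rightarrow> ('b \<Rightarrow> 'b) \<Rightarrow> 'k \<Rightarrow> 'b \<Rightarrow> 'b" where
  "lnd_exp c D s f = (\<Sum>n < (LEAST m. (D ^^ m) f = 0). c (s ^ n / fact n) * (D ^^ n) f)"

text \<open>Structure map of K[X] = K[Y][t].\<close>
definition poly_K :: "('k \<Rightarrow> 'a::comm_ring_1) \<Rightarrow> 'k \<Rightarrow> 'a poly" where
  "poly_K c a = [:c a:]"

end

theory Submission
  imports Defs
begin


definition rh :: "('a::comm_ring_1 \<Rightarrow> 'b::comm_ring_1) \<Rightarrow> bool" where
  "rh h \<longleftrightarrow> h 1 = 1 \<and> (\<forall>x y. h (x+y) = h x + h y) \<and> (\<forall>x y. h (x*y) = h x * h y)"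

lemma rh_K: "K_structure c = rh c" by (simp add: K_structure_def rh_def)

lemma rh_add: "rh h \<Longrightarrow> h (x+y) = h x + h y" by (simp add: rh_def)
lemma rh_mult: "rh h \<Longrightarrow> h (x*y) = h x * h y" by (simp add: rh_def)
lemma rh_1: "rh h \<Longrightarrow> h 1 = 1" by (simp add: rh_def)
lemma rh_0: "rh h \<Longrightarrow> h 0 = 0"
  using rh_add[of h 0 0] by simp
lemma rh_neg: "rh h \<Longrightarrow> h (-x) = - h x"
proof -
  assume h: "rh h"
  have "h x + h (-x) = 0" using rh_add[OF h, of x "-x"] rh_0[OF h] by simp
  from minus_unique[OF this] show ?thesis by simp
qed
lemma rh_diff: "rh h \<Longrightarrow> h (x-y) = h x - h y"
  using rh_add[of h x "-y"] rh_neg[of h y] by simp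
lemma rh_sum: "rh h \<Longrightarrow> h (sum f A) = (\<Sum>a\<in>A. h (f a))"
  by (induction A rule: infinite_finite_induct) (auto simp: rh_0 rh_add)
lemma rh_pow: "rh h \<Longrightarrow> h (x^n) = (h x)^n"
  by (induction n) (auto simp: rh_1 rh_mult)
lemma rh_of_nat: "rh h \<Longrightarrow> h (of_nat n) = of_nat n"
  by (induction n) (auto simp: rh_0 rh_1 rh_add)
lemma rh_comp: "rh h \<Longrightarrow> rh g \<Longrightarrow> rh (g \<circ> h)"
  by (simp add: rh_def)
lemma rh_const: "rh (\<lambda>a::'a::comm_ring_1. [:a:])"
  by (simp add: rh_def)
lemma rh_inv: "rh (h::'a::field \<Rightarrow> 'b::comm_ring_1) \<Longrightarrow> a \<noteq> 0 \<Longrightarrow> h (inverse a) * h a = 1"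
  by (metis rh_1 rh_mult left_inverse)
lemma rh_inv': "rh (h::'a::field \<Rightarrow> 'b::comm_ring_1) \<Longrightarrow> a \<noteq> 0 \<Longrightarrow> h (1/a) * h a = 1"
  using rh_inv[of h a] by (simp add: divide_inverse)

lemma rh_map_poly: assumes h: "rh h" shows "rh (map_poly h)"
proof -
  have h0: "h 0 = 0" using h by (rule rh_0)
  have "map_poly h (p * q) = map_poly h p * map_poly h q" for p q
    by (rule poly_eqI) (simp add: coeff_map_poly h0 coeff_mult rh_sum[OF h] rh_mult[OF h])
  moreover have "map_poly h (p + q) = map_poly h p + map_poly h q" for p q
    by (rule poly_eqI) (simp add: coeff_map_poly h0 rh_add[OF h])
  ultimately show ?thesis using h by (simp add: rh_def rh_1)
qed

lemma poly_K_rh: "rh c \<Longrightarrow> rh (poly_K c)"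
proof -
  assume "rh c"
  then have "rh ((\<lambda>a. [:a:]) \<circ> c)" by (rule rh_comp[OF _ rh_const])
  moreover have "poly_K c = (\<lambda>a. [:c a:])" by (rule ext) (simp add: poly_K_def)
  ultimately show ?thesis by (simp add: comp_def)
qed

section \<open>Derivations\<close>

locale der =
  fixes c :: "'k::field_char_0 \<Rightarrow> 'b::comm_ring_1" and D :: "'b \<Rightarrow> 'b"
  assumes c: "rh c" and D: "is_derivation c D"
begin

lemma add: "D (x+y) = D x + D y" using D unfolding is_derivation_def by blast
lemma lin: "D (c a * x) = c a * D x" using D unfolding is_derivation_def by blast
lemma leib: "D (x*y) = x * D y + y * D x" using D unfolding is_derivation_def by blast
lemma zero[simp]: "D 0 = 0" using add[of 0 0] by simp
lemma one[simp]: "D 1 = 0"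
proof -
  have "D 1 = D 1 + D 1" using leib[of 1 1] by simp
  then show ?thesis by simp
qed
lemma const[simp]: "D (c a) = 0" using lin[of a 1] one by (simp only: mult_1_right mult_zero_right)
lemma neg: "D (-x) = - D x"
proof -
  have "D x + D (-x) = 0" using add[of x "-x"] by simp
  from minus_unique[OF this] show ?thesis by simp
qed
lemma of_nat[simp]: "D (of_nat m) = 0" using const[of "of_nat m"] by (simp add: rh_of_nat[OF c])
lemma diff: "D (x-y) = D x - D y" using add[of x "-y"] neg[of y] by simp
lemma sum: "D (sum f A) = (\<Sum>a\<in>A. D (f a))"
  by (induction A rule: infinite_finite_induct) (auto simp: add)
lemma of_nat_mult: "D (of_nat n * x) = of_nat n * D x"
  using lin[of "of_nat n" x] by (simp add: rh_of_nat[OF c])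

lemma pow_zero[simp]: "(D^^n) 0 = 0" by (induction n) auto
lemma pow_add: "(D^^n) (x+y) = (D^^n) x + (D^^n) y" by (induction n) (auto simp: add)
lemma pow_lin: "(D^^n) (c a * x) = c a * (D^^n) x" by (induction n) (auto simp: lin)
lemma pow_of_nat_mult: "(D^^n) (of_nat m * x) = of_nat m * (D^^n) x"
  by (induction n) (auto simp: of_nat_mult)
lemma pow_sum: "(D^^n) (sum f A) = (\<Sum>a\<in>A. (D^^n) (f a))"
  by (induction A rule: infinite_finite_induct) (auto simp: pow_add)
lemma pow_mono: "(D^^n) x = 0 \<Longrightarrow> n \<le> m \<Longrightarrow> (D^^m) x = 0"
proof (induction m)
  case (Suc m) then show ?case by (cases "n = Suc m") auto
qed auto
lemma pow_comp: "(D^^m) ((D^^n) x) = (D^^(m+n)) x"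
  by (simp add: funpow_add)

lemma leibniz: "(D^^n) (f*g) = (\<Sum>k\<le>n. of_nat (n choose k) * (D^^k) f * (D^^(n-k)) g)"
proof (induct n)
  case 0
  then show ?case by simp
next
  case (Suc n)
  define B where "B i j = (D^^i) f * (D^^j) g" for i j
  have DB: "D (of_nat m * B i j) = of_nat m * B (Suc i) j + of_nat m * B i (Suc j)" for m i j
    by (simp add: B_def of_nat_mult leib algebra_simps)
  have "(D^^Suc n) (f*g) = D (\<Sum>k\<le>n. of_nat (n choose k) * B k (n-k))"
    using Suc.hyps by (simp add: B_def mult.assoc)
  also have "\<dots> = (\<Sum>k\<le>n. of_nat (n choose k) * B (Suc k) (n-k)) +
      (\<Sum>k\<le>n. of_nat (n choose k) * B k (Suc (n - k)))"
    by (simp add: sum DB sum.distrib)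
  also have "(\<Sum>k\<le>n. of_nat (n choose k) * B k (Suc (n - k))) =
      (\<Sum>k\<le>Suc n. of_nat (n choose k) * B k (Suc n - k))"
    by (simp add: Suc_diff_le binomial_eq_0)
  also have "(\<Sum>k\<le>n. of_nat (n choose k) * B (Suc k) (n-k)) =
      (\<Sum>k\<le>Suc n. of_nat (if k = 0 then 0 else n choose (k-1)) * B k (Suc n - k))"
    by (subst sum.atMost_Suc_shift) simp
  also have "(\<Sum>k\<le>Suc n. of_nat (if k = 0 then 0 else n choose (k-1)) * B k (Suc n - k)) +
      (\<Sum>k\<le>Suc n. of_nat (n choose k) * B k (Suc n - k)) =
      (\<Sum>k\<le>Suc n. of_nat (Suc n choose k) * B k (Suc n - k))"
    by (subst sum.distrib[symmetric], rule sum.cong)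
       (auto simp: algebra_simps choose_reduce_nat)
  finally show ?case by (simp add: B_def mult.assoc)
qed


definition exN :: "nat \<Rightarrow> 'k \<Rightarrow> 'b \<Rightarrow> 'b" where
  "exN N l f = (\<Sum>n<N. c (l^n / fact n) * (D^^n) f)"

lemma exN_indep:
  assumes "(D^^N0) f = 0" "N0 \<le> N"
  shows "exN N l f = exN N0 l f"
  unfolding exN_def
proof (rule sum.mono_neutral_right)
  show "\<forall>i\<in>{..<N} - {..<N0}. c (l ^ i / fact i) * (D ^^ i) f = 0"
    using pow_mono[OF assms(1)] by auto
qed (use assms in auto)

lemma exN_zero:
  assumes "(D^^N) f = 0"
  shows "exN N 0 f = f"
proof (cases N)
  case 0 then show ?thesis using assms by (simp add: exN_def)
next
  case (Suc M)
  have "exN N 0 f = (\<Sum>n\<in>{0}. c (0^n / fact n) * (D^^n) f)"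
    unfolding exN_def
    by (rule sum.mono_neutral_right) (use Suc c in \<open>auto simp: rh_0 power_0_left\<close>)
  then show ?thesis using c by (simp add: rh_1)
qed

lemma exN_mult:
  assumes a: "(D^^a) f = 0" and b: "(D^^b) g = 0"
  shows "exN (a+b) l (f*g) = exN a l f * exN b l g"
proof -
  define X where "X i j = (c (l^i / fact i) * (D^^i) f) * (c (l^j / fact j) * (D^^j) g)" for i j
  have coef: "c (l^n / fact n) * of_nat (n choose k) = c (l^k / fact k) * c (l^(n-k) / fact (n-k))"
    if "k \<le> n" for n k
  proof -
    have "l^n / fact n * of_nat (n choose k) = l^k / fact k * (l^(n-k) / fact (n-k))"
      using that by (simp add: binomial_fact power_add[symmetric] field_simps)
    then show ?thesis
      by (metis rh_mult[OF c] rh_of_nat[OF c])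
  qed
  have "exN (a+b) l (f*g) = (\<Sum>n<a+b. \<Sum>k\<le>n. X k (n-k))"
    unfolding exN_def leibniz sum_distrib_left
    by (intro sum.cong refl) (simp add: X_def coef[symmetric] mult_ac)
  also have "\<dots> = (\<Sum>(i,j)\<in>{(i,j). i+j < a+b}. X i j)"
    by (rule sum.triangle_reindex[symmetric])
  also have "\<dots> = (\<Sum>(i,j)\<in>{..<a}\<times>{..<b}. X i j)"
  proof -
    have "(\<Sum>(i,j)\<in>{..<a}\<times>{..<b}. X i j) = (\<Sum>(i,j)\<in>{(i,j). i+j < a+b}. X i j)"
    proof (rule sum.mono_neutral_left)
      show "finite {(i, j). i + j < a + b}"
        by (rule finite_subset[of _ "{..<a+b}\<times>{..<a+b}"]) auto
      show "\<forall>x\<in>{(i, j). i + j < a + b} - {..<a} \<times> {..<b}. (case x of (i, j) \<Rightarrow> X i j) = 0"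
      proof
        fix x assume x: "x \<in> {(i, j). i + j < a + b} - {..<a} \<times> {..<b}"
        obtain i j where ij: "x = (i,j)" by force
        with x have "a \<le> i \<or> b \<le> j" by auto
        then show "(case x of (i, j) \<Rightarrow> X i j) = 0"
          using pow_mono[OF a, of i] pow_mono[OF b, of j] ij by (auto simp: X_def)
      qed
    qed auto
    then show ?thesis by simp
  qed
  also have "\<dots> = exN a l f * exN b l g"
    unfolding exN_def sum_product sum.cartesian_product X_def by simp
  finally show ?thesis .
qed

lemma exN_comp:
  assumes f: "(D^^N) f = 0"
  shows "exN N m (exN N l f) = exN N (m+l) f"
proof -
  define Y where "Y i j = c (m^i / fact i) * c (l^j / fact j) * (D^^(i+j)) f" for i j
  have "exN N m (exN N l f) = (\<Sum>i<N. \<Sum>j<N. Y i j)"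
    unfolding exN_def pow_sum pow_lin pow_comp sum_distrib_left
    by (simp add: Y_def mult_ac add.commute)
  also have "\<dots> = (\<Sum>(i,j)\<in>{..<N}\<times>{..<N}. Y i j)"
    by (simp add: sum.cartesian_product)
  also have "\<dots> = (\<Sum>(i,j)\<in>{(i,j). i+j < N}. Y i j)"
  proof (rule sum.mono_neutral_right)
    show "\<forall>x\<in>{..<N} \<times> {..<N} - {(i, j). i + j < N}. (case x of (i, j) \<Rightarrow> Y i j) = 0"
    proof
      fix x assume x: "x \<in> {..<N} \<times> {..<N} - {(i, j). i + j < N}"
      obtain i j where ij: "x = (i,j)" by force
      with x have "N \<le> i + j" by auto
      then show "(case x of (i, j) \<Rightarrow> Y i j) = 0"
        using pow_mono[OF f, of "i+j"] ij by (auto simp: Y_def)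
    qed
  qed auto
  also have "\<dots> = (\<Sum>n<N. \<Sum>k\<le>n. Y k (n-k))"
    by (rule sum.triangle_reindex)
  also have "\<dots> = exN N (m+l) f"
    unfolding exN_def
  proof (rule sum.cong[OF refl])
    fix n
    have "(m+l)^n / fact n = (\<Sum>k\<le>n. m^k / fact k * (l^(n-k) / fact (n-k)))"
      unfolding binomial_ring sum_divide_distrib
      by (intro sum.cong refl) (simp add: binomial_fact field_simps)
    then have "c ((m+l)^n / fact n) = (\<Sum>k\<le>n. c (m^k / fact k) * c (l^(n-k) / fact (n-k)))"
      by (simp only: rh_sum[OF c] rh_mult[OF c])
    then show "(\<Sum>k\<le>n. Y k (n - k)) = c ((m + l) ^ n / fact n) * (D ^^ n) f"
      by (simp add: Y_def sum_distrib_right)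
  qed
  finally show ?thesis .
qed

end



lemma t_mult: "monom 1 1 * (q::'a::comm_ring_1 poly) = pCons 0 q"
  by (rule poly_eqI) (simp add: coeff_monom_mult coeff_pCons split: nat.split)

lemma pCons_decomp: "pCons a (h::'a::comm_ring_1 poly) = [:a:] + monom 1 1 * h"
  unfolding t_mult by (rule poly_eqI) (simp add: coeff_pCons split: nat.split)

lemma t_cancel:
  fixes x y :: "'a::comm_ring_1 poly"
  assumes "monom 1 1 * x = monom 1 1 * y" shows "x = y"
  using assms unfolding t_mult by simp

lemma unit_poly_deg0:
  fixes u w :: "'v::comm_ring_1 poly"
  assumes red: "\<And>(x::'v) (n::nat). x ^ n = 0 \<Longrightarrow> x = 0"
    and uw: "u * w = 1"
  shows "degree u = 0"
proof (rule ccontr)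
  assume nz: "degree u \<noteq> 0"
  define n where "n = degree u"
  define m where "m = degree w"
  define a where "a = lead_coeff u"
  have a0: "a \<noteq> 0" using nz by (auto simp: a_def)
  have claim: "r \<le> m \<Longrightarrow> a^(r+1) * coeff w (m - r) = 0" for r
  proof (induction r rule: less_induct)
    case (less r)
    define N where "N = n + m - r"
    have Nn: "n \<le> N" "N - n = m - r" using less.prems by (auto simp: N_def)
    have "coeff (u*w) N = 0" using nz Nn by (auto simp: uw n_def)
    then have "a^r * (\<Sum>i\<le>N. coeff u i * coeff w (N-i)) = 0"
      by (simp add: coeff_mult)
    then have S: "(\<Sum>i\<le>N. a^r * (coeff u i * coeff w (N-i))) = 0"
      by (simp add: sum_distrib_left)
    have "(\<Sum>i\<le>N. a^r * (coeff u i * coeff w (N-i))) = (\<Sum>i\<in>{n}. a^r * (coeff u i * coeff w (N-i)))"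
    proof (rule sum.mono_neutral_right)
      show "\<forall>i\<in>{..N} - {n}. a ^ r * (coeff u i * coeff w (N - i)) = 0"
      proof
        fix i assume i: "i \<in> {..N} - {n}"
        show "a ^ r * (coeff u i * coeff w (N - i)) = 0"
        proof (cases "n < i")
          case True then show ?thesis by (simp add: coeff_eq_0 n_def)
        next
          case False
          with i have ilt: "i < n" by auto
          show ?thesis
          proof (cases "m < N - i")
            case True then show ?thesis by (simp add: coeff_eq_0 m_def)
          next
            case False
            define r' where "r' = m - (N - i)"
            have r'r: "r' < r" "r' \<le> m" "m - r' = N - i"
              using False ilt less.prems by (auto simp: r'_def N_def)
            have IH: "a^(r'+1) * coeff w (N - i) = 0" using less.IH r'r by metis
            have pow: "a^r = a^(r - r' - 1) * a^(r'+1)"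
            proof -
              have "r = (r - r' - 1) + (r' + 1)" using r'r by simp
              then show ?thesis by (metis power_add)
            qed
            have "a^r * (coeff u i * coeff w (N-i)) = (a^(r-r'-1) * coeff u i) * (a^(r'+1) * coeff w (N - i))"
              unfolding pow by (simp only: mult_ac)
            then show ?thesis using IH by simp
          qed
        qed
      qed
    qed (use Nn in auto)
    with S have "a^r * (a * coeff w (N - n)) = 0" by (simp add: a_def n_def)
    then show ?case using Nn by (simp add: mult_ac)
  qed
  have "a^(m+1) * coeff w 0 = 0" using claim[of m] by simp
  moreover have "coeff u 0 * coeff w 0 = 1"
    using arg_cong[OF uw, of "\<lambda>p. coeff p 0"] by (simp add: coeff_mult)
  ultimately have "a^(m+1) = 0"
    by (metis mult.assoc mult.commute mult_1_right mult_zero_left)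
  then show False using red a0 by blast
qed

definition pdv :: "'a::comm_ring_1 poly \<Rightarrow> 'a poly" where
  "pdv g = (\<Sum>i<degree g. monom (of_nat (Suc i) * coeff g (Suc i)) i)"

lemma coeff_pdv: "coeff (pdv g) n = of_nat (Suc n) * coeff g (Suc n)"
proof -
  have "coeff (pdv g) n = (\<Sum>i<degree g. if i = n then of_nat (Suc i) * coeff g (Suc i) else 0)"
    by (simp add: pdv_def coeff_sum coeff_monom)
  also have "\<dots> = of_nat (Suc n) * coeff g (Suc n)"
    by (cases "n < degree g") (auto simp: coeff_eq_0)
  finally show ?thesis .
qed

lemma pdv_pCons: "pdv (pCons a h) = h + monom 1 1 * pdv h"
  unfolding t_mult
  by (rule poly_eqI) (auto simp: coeff_pdv coeff_pCons algebra_simps split: nat.split)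

definition cmap :: "(nat \<Rightarrow> 'a \<Rightarrow> 'a) \<Rightarrow> 'a::comm_ring_1 poly \<Rightarrow> 'a poly" where
  "cmap F g = (\<Sum>i\<le>degree g. monom (F i (coeff g i)) i)"

lemma coeff_cmap:
  assumes "\<And>i. F i 0 = 0"
  shows "coeff (cmap F g) n = F n (coeff g n)"
proof -
  have "coeff (cmap F g) n = (\<Sum>i\<le>degree g. if i = n then F i (coeff g i) else 0)"
    by (simp add: cmap_def coeff_sum coeff_monom)
  also have "\<dots> = F n (coeff g n)"
    by (cases "n \<le> degree g") (auto simp: coeff_eq_0 assms)
  finally show ?thesis .
qed

lemma der_pdv:
  assumes d: "der (poly_K \<kappa>) Dv" and cst: "\<And>r. Dv [:r:] = 0"
  shows "Dv g = pdv g * Dv (monom 1 1)"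
proof (induction g rule: pCons_induct)
  case 0 then show ?case using der.zero[OF d] by (simp add: pdv_def)
next
  case (pCons a h)
  have "Dv (pCons a h) = Dv [:a:] + Dv (monom 1 1 * h)"
    by (subst pCons_decomp) (rule der.add[OF d])
  also have "\<dots> = monom 1 1 * Dv h + h * Dv (monom 1 1)"
    using cst der.leib[OF d] by simp
  also have "\<dots> = pdv (pCons a h) * Dv (monom 1 1)"
  proof -
    have "pdv (pCons a h) = h + monom 1 1 * pdv h"
      by (rule pdv_pCons)
    then show ?thesis using pCons.IH by (simp add: distrib_right mult.assoc add.commute)
  qed
  finally show ?case .
qed

lemma slice_const:
  fixes \<kappa> :: "'k::field_char_0 \<Rightarrow> 'v::comm_ring_1"
  assumes d: "der (poly_K \<kappa>) Dv" and cst: "\<And>r. Dv [:r:] = 0"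
    and red: "\<And>(x::'v) (n::nat). x ^ n = 0 \<Longrightarrow> x = 0"
    and sl: "Dv s = 1" and g: "Dv g = 0"
  shows "degree g = 0"
proof -
  have k: "rh \<kappa>"
  proof -
    have "rh (poly_K \<kappa>)" using d by (rule der.c)
    then have "rh (\<lambda>a. coeff (poly_K \<kappa> a) 0)" unfolding rh_def poly_K_def by simp
    then show ?thesis by (simp add: poly_K_def)
  qed
  define T where "T = Dv (monom 1 1)"
  have "Dv s = pdv s * T" unfolding T_def by (rule der_pdv[OF d cst])
  with sl have u: "T * pdv s = 1" by (simp add: mult.commute)
  have "degree T = 0" by (rule unit_poly_deg0[OF red u])
  then have T: "T = [:coeff T 0:]" by (metis degree_0_id)
  have b: "coeff T 0 * coeff (pdv s) 0 = 1"
    using arg_cong[OF u, of "\<lambda>p. coeff p 0"] by (simp add: coeff_mult)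
  have "pdv g * T = 0" using der_pdv[OF d cst, of g] g by (simp add: T_def)
  then have "pdv g * T * [:coeff (pdv s) 0:] = 0" by simp
  then have pg: "pdv g = 0"
    using b by (subst (asm) T) (simp add: mult.assoc mult.commute)
  have "coeff g i = 0" if "0 < i" for i
  proof -
    obtain n where i: "i = Suc n" using \<open>0 < i\<close> by (cases i) auto
    have "of_nat (Suc n) * coeff g (Suc n) = 0"
      using arg_cong[OF pg, of "\<lambda>p. coeff p n"] by (simp add: coeff_pdv)
    moreover have "\<kappa> (1 / of_nat (Suc n)) * of_nat (Suc n) = 1"
    proof -
      have "\<kappa> (1 / of_nat (Suc n)) * \<kappa> (of_nat (Suc n)) = 1"
        by (rule rh_inv'[OF k]) (metis of_nat_eq_0_iff Zero_not_Suc)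
      then show ?thesis by (simp only: rh_of_nat[OF k])
    qed
    ultimately have "coeff g (Suc n) = \<kappa> (1 / of_nat (Suc n)) * (of_nat (Suc n) * coeff g (Suc n))"
      by (metis mult.assoc mult_1)
    with \<open>of_nat (Suc n) * coeff g (Suc n) = 0\<close> show ?thesis using i by simp
  qed
  then show ?thesis by (meson degree_le le_zero_eq)
qed



lemma coeff_mult_top:
  fixes p q :: "'a::comm_ring_1 poly"
  assumes "degree p \<le> a" "degree q \<le> b"
  shows "coeff (p*q) (a+b) = coeff p a * coeff q b"
proof -
  have "coeff (p*q) (a+b) = (\<Sum>i\<le>a+b. coeff p i * coeff q (a+b-i))" by (simp add: coeff_mult)
  also have "\<dots> = (\<Sum>i\<in>{a}. coeff p i * coeff q (a+b-i))"
  proof (rule sum.mono_neutral_right)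
    show "\<forall>i\<in>{..a + b} - {a}. coeff p i * coeff q (a + b - i) = 0"
    proof
      fix i assume i: "i \<in> {..a + b} - {a}"
      show "coeff p i * coeff q (a + b - i) = 0"
      proof (cases "a < i")
        case True then show ?thesis using assms by (simp add: coeff_eq_0)
      next
        case False
        with i have "b < a + b - i" by auto
        then show ?thesis using assms by (simp add: coeff_eq_0)
      qed
    qed
  qed auto
  finally show ?thesis by simp
qed

lemma der_intro:
  assumes c: "rh c"
    and a: "\<And>x y. E (x+y) = E x + E y"
    and l: "\<And>x y. E (x*y) = x * E y + y * E x"
    and z: "\<And>a. E (c a) = 0"
  shows "is_derivation c E"
  unfolding is_derivation_def using a l z by simp

lemma poly_K_mult: "poly_K c x * p = smult (c x) p"
  by (simp add: poly_K_def)

locale keyctx =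
  fixes \<kappa> :: "'k::field_char_0 \<Rightarrow> 'v::comm_ring_1" and Dv :: "'v poly \<Rightarrow> 'v poly" and M :: nat
  assumes \<kappa>: "rh \<kappa>" and lnd: "is_LND (poly_K \<kappa>) Dv"
    and red: "\<And>(x::'v) (n::nat). x ^ n = 0 \<Longrightarrow> x = 0"
    and rig: "rigid \<kappa>" and bnd: "\<And>r. degree (Dv [:r:]) \<le> M"
begin

lemma dv: "der (poly_K \<kappa>) Dv"
  using lnd poly_K_rh[OF \<kappa>] by (simp add: der_def is_LND_def)

interpretation Dv: der "poly_K \<kappa>" Dv by (rule dv)

lemma nilD: "\<exists>n. (Dv^^n) x = 0" using lnd by (simp add: is_LND_def)

theorem key: "Dv [:r:] = 0"
proof (rule ccontr)
  assume r0: "Dv [:r:] \<noteq> 0"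
  define S where "S = {degree (Dv [:a:]) | a. Dv [:a:] \<noteq> 0}"
  have finS: "finite S"
    by (rule finite_subset[of _ "{..M}"]) (auto simp: S_def bnd)
  have Sne: "S \<noteq> {}" using r0 by (auto simp: S_def)
  define m where "m = Max S"
  obtain r1 where r1: "Dv [:r1:] \<noteq> 0" "degree (Dv [:r1:]) = m"
    using Max_in[OF finS Sne] by (auto simp: m_def S_def)
  have mb: "degree (Dv [:a:]) \<le> m" for a
  proof (cases "Dv [:a:] = 0")
    case False then show ?thesis using Max_ge[OF finS] by (auto simp: m_def S_def)
  qed simp
  define t where "t = (monom 1 1 :: 'v poly)"
  define k where "k = (if degree (Dv t) \<le> m + 1 then m else degree (Dv t) - 1)"
  have kb1: "degree (Dv [:a:]) \<le> k" for a using mb[of a] by (auto simp: k_def)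
  have kb2: "degree (Dv t) \<le> k + 1" by (simp add: k_def)
  define \<delta> where "\<delta> a = coeff (Dv [:a:]) k" for a
  define e where "e = coeff (Dv t) (k+1)"
  have attain: "\<delta> r1 \<noteq> 0 \<or> e \<noteq> 0"
  proof (cases "degree (Dv t) \<le> m + 1")
    case True
    then have "k = m" by (simp add: k_def)
    moreover have "lead_coeff (Dv [:r1:]) \<noteq> 0" using r1(1) by simp
    ultimately show ?thesis using r1(2) by (simp add: \<delta>_def)
  next
    case False
    then have "k + 1 = degree (Dv t)" "Dv t \<noteq> 0" by (auto simp: k_def)
    then show ?thesis by (simp add: e_def)
  qed
  have cmul: "coeff ([:a:] * q) n = a * coeff q n" for a and q :: "'v poly" and n
    by simp
  have dder: "is_derivation \<kappa> \<delta>"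
    unfolding is_derivation_def
  proof (intro conjI allI)
    fix x y
    show "\<delta> (x + y) = \<delta> x + \<delta> y"
      unfolding \<delta>_def using Dv.add[of "[:x:]" "[:y:]"] by simp
    show "\<delta> (x * y) = x * \<delta> y + y * \<delta> x"
      unfolding \<delta>_def using Dv.leib[of "[:x:]" "[:y:]"] by (simp add: mult.commute)
  next
    fix a x
    show "\<delta> (\<kappa> a * x) = \<kappa> a * \<delta> x"
      unfolding \<delta>_def using Dv.lin[of a "[:x:]"] by (simp add: poly_K_def mult.commute)
  qed
  interpret dl: der \<kappa> \<delta> using \<kappa> dder by (simp add: der_def)
  have d0: "\<delta> 0 = 0" by (rule dl.zero)
  have d1: "\<delta> 1 = 0" by (rule dl.one)
  have T: "degree g \<le> j \<Longrightarrow> degree (Dv g) \<le> j + k \<and>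
      coeff (Dv g) (j+k) = \<delta> (coeff g j) + of_nat j * coeff g j * e" for g j
  proof (induction g arbitrary: j rule: pCons_induct)
    case 0 then show ?case by (simp add: d0)
  next
    case (pCons a h)
    show ?case
    proof (cases j)
      case 0
      with pCons.prems have h0: "h = 0" by (auto simp: degree_pCons_eq_if split: if_splits)
      have "pCons a h = [:a:]" using h0 by simp
      then show ?thesis using kb1[of a] 0 by (simp add: \<delta>_def)
    next
      case (Suc j')
      with pCons.prems have hj: "degree h \<le> j'" by (auto simp: degree_pCons_eq_if split: if_splits)
      have IH: "degree (Dv h) \<le> j' + k" "coeff (Dv h) (j'+k) = \<delta> (coeff h j') + of_nat j' * coeff h j' * e"
        using pCons.IH[OF hj] by auto
      have eq: "Dv (pCons a h) = Dv [:a:] + t * Dv h + h * Dv t"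
      proof -
        have "Dv (pCons a h) = Dv [:a:] + Dv (t * h)"
          unfolding t_def by (subst pCons_decomp) (rule Dv.add)
        then show ?thesis by (simp add: Dv.leib mult.commute add.assoc)
      qed
      have dg1: "degree (Dv [:a:]) \<le> j + k" using kb1[of a] by simp
      have dg2: "degree (t * Dv h) \<le> j + k"
        using degree_mult_le[of t "Dv h"] IH(1) Suc by (simp add: t_def degree_monom_eq)
      have dg3: "degree (h * Dv t) \<le> j + k"
        using degree_mult_le[of h "Dv t"] hj kb2 Suc by simp
      have c1: "coeff (Dv [:a:]) (j+k) = 0" using kb1[of a] Suc by (simp add: coeff_eq_0)
      have c2: "coeff (t * Dv h) (j+k) = coeff (Dv h) (j'+k)"
        using Suc unfolding t_def t_mult by simp
      have c3: "coeff (h * Dv t) (j+k) = coeff h j' * e"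
        using coeff_mult_top[OF hj kb2] Suc by (simp add: e_def)
      have "degree (Dv (pCons a h)) \<le> j + k"
        unfolding eq by (intro degree_add_le dg1 dg2 dg3)
      moreover have "coeff (Dv (pCons a h)) (j+k) = \<delta> (coeff (pCons a h) j) + of_nat j * coeff (pCons a h) j * e"
        unfolding eq using c1 c2 c3 IH(2) Suc by (simp add: algebra_simps)
      ultimately show ?thesis by blast
    qed
  qed
  define F where "F i a = \<delta> a + of_nat i * a * e" for i a
  have F0: "F i 0 = 0" for i by (simp add: F_def d0)
  define P where "P g = cmap F g" for g
  define E where "E g = monom 1 k * P g" for g
  have coeff_P: "coeff (P g) n = F n (coeff g n)" for g n
    unfolding P_def by (rule coeff_cmap) (rule F0)
  have coeff_E: "coeff (E g) n = (if n < k then 0 else F (n-k) (coeff g (n-k)))" for g n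
    by (simp add: E_def coeff_monom_mult coeff_P)
  have E_deg: "degree g \<le> j \<Longrightarrow> degree (E g) \<le> j + k" for g j
    by (rule degree_le) (auto simp: coeff_E coeff_eq_0 F0)
  have E_top: "coeff (E g) (j + k) = F j (coeff g j)" for g j
    by (simp add: coeff_E)
  have E_monom: "E (monom b i) = monom (F i b) (i + k)" for b i
    by (rule poly_eqI) (auto simp: coeff_E coeff_monom F0)
  have P_add: "P (x + y) = P x + P y" for x y
    by (rule poly_eqI) (simp add: coeff_P F_def dl.add algebra_simps)
  have P_leib: "P (x * y) = x * P y + y * P x" for x y
  proof (rule poly_eqI)
    fix n
    have A: "coeff (y * P x) n = (\<Sum>i\<le>n. F i (coeff x i) * coeff y (n - i))"
    proof -
      have "coeff (P x * y) n = (\<Sum>i\<le>n. F i (coeff x i) * coeff y (n - i))"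
        by (simp add: coeff_mult coeff_P)
      then show ?thesis by (subst mult.commute)
    qed
    have "coeff (x * P y + y * P x) n =
        (\<Sum>i\<le>n. coeff x i * F (n - i) (coeff y (n-i)) + F i (coeff x i) * coeff y (n - i))"
      by (simp only: coeff_add A) (simp add: coeff_mult coeff_P sum.distrib)
    also have "\<dots> = (\<Sum>i\<le>n. (coeff x i * \<delta> (coeff y (n-i)) + coeff y (n-i) * \<delta> (coeff x i))
         + of_nat n * (coeff x i * coeff y (n-i)) * e)"
    proof (rule sum.cong[OF refl])
      fix i assume "i \<in> {..n}"
      then have "of_nat n = (of_nat (n - i) + of_nat i :: 'v)"
        by (simp add: of_nat_add[symmetric])
      then show "coeff x i * F (n - i) (coeff y (n - i)) + F i (coeff x i) * coeff y (n - i) =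
         (coeff x i * \<delta> (coeff y (n-i)) + coeff y (n-i) * \<delta> (coeff x i))
         + of_nat n * (coeff x i * coeff y (n-i)) * e"
        by (simp add: F_def algebra_simps)
    qed
    also have "\<dots> = coeff (P (x * y)) n"
      by (simp add: coeff_P F_def coeff_mult dl.sum dl.leib sum.distrib sum_distrib_left sum_distrib_right)
    finally show "coeff (P (x * y)) n = coeff (x * P y + y * P x) n" by simp
  qed
  have Eder: "is_derivation (poly_K \<kappa>) E"
  proof (rule der_intro[OF poly_K_rh[OF \<kappa>]])
    show "E (x + y) = E x + E y" for x y by (simp add: E_def P_add algebra_simps)
    show "E (x * y) = x * E y + y * E x" for x y by (simp add: E_def P_leib algebra_simps)
    show "E (poly_K \<kappa> a) = 0" for a
      by (rule poly_eqI) (simp add: coeff_E poly_K_def F_def coeff_pCons split: nat.split)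
  qed
  interpret Ed: der "poly_K \<kappa>" E using Eder poly_K_rh[OF \<kappa>] by (simp add: der_def)
  have NL: "degree g \<le> j \<Longrightarrow> degree ((Dv^^n) g) \<le> j + n*k \<and>
      coeff ((Dv^^n) g) (j + n*k) = coeff ((E^^n) g) (j + n*k) \<and> degree ((E^^n) g) \<le> j + n*k" for g j n
  proof (induction n)
    case 0 then show ?case by simp
  next
    case (Suc n)
    define h where "h = (Dv^^n) g"
    define h' where "h' = (E^^n) g"
    have IH: "degree h \<le> j + n*k" "coeff h (j+n*k) = coeff h' (j+n*k)" "degree h' \<le> j + n*k"
      using Suc by (auto simp: h_def h'_def)
    have TT: "degree (Dv h) \<le> j + n*k + k" "coeff (Dv h) (j+n*k+k) = \<delta> (coeff h (j+n*k)) + of_nat (j+n*k) * coeff h (j+n*k) * e"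
      using T[OF IH(1)] by auto
    have "coeff (E h') (j+n*k+k) = F (j+n*k) (coeff h' (j+n*k))" by (rule E_top)
    moreover have "degree (E h') \<le> j+n*k+k" using E_deg[OF IH(3)] .
    ultimately show ?case using TT IH(2)
      by (simp add: h_def h'_def F_def add.assoc add.commute[of k])
  qed
  have EM: "(E^^n) (monom a j) = monom (coeff ((E^^n) (monom a j)) (j + n*k)) (j + n*k)" for n a j
  proof (induction n)
    case 0 then show ?case by simp
  next
    case (Suc n)
    have "(E^^Suc n) (monom a j) = E (monom (coeff ((E^^n) (monom a j)) (j + n*k)) (j + n*k))"
      using Suc by simp
    also have "\<dots> = monom (F (j+n*k) (coeff ((E^^n) (monom a j)) (j + n*k))) (j + Suc n*k)"
      by (simp add: E_monom add.assoc add.commute[of k])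
    finally have X: "(E^^Suc n) (monom a j) = monom (F (j+n*k) (coeff ((E^^n) (monom a j)) (j + n*k))) (j + Suc n*k)" .
    show ?case by (subst X, subst X) simp
  qed
  have Emonnil: "\<exists>N. (E^^N) (monom a j) = 0" for a j
  proof -
    obtain N where N: "(Dv^^N) (monom a j) = 0" using nilD by blast
    have "degree (monom a j) \<le> j" by (simp add: degree_monom_le)
    from NL[OF this, of N] N have "coeff ((E^^N) (monom a j)) (j + N*k) = 0" by simp
    then have "(E^^N) (monom a j) = 0" by (subst EM) simp
    then show ?thesis by blast
  qed
  have Enil: "\<exists>N. (E^^N) g = 0" for g
  proof -
    have "\<forall>i. \<exists>N. (E^^N) (monom (coeff g i) i) = 0" using Emonnil by blast
    then obtain f where f: "\<And>i. (E^^f i) (monom (coeff g i) i) = 0" by metis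
    define N where "N = (\<Sum>i\<le>degree g. f i)"
    have "(E^^N) g = (E^^N) (\<Sum>i\<le>degree g. monom (coeff g i) i)"
      by (simp add: poly_as_sum_of_monoms)
    also have "\<dots> = (\<Sum>i\<le>degree g. (E^^N) (monom (coeff g i) i))" by (rule Ed.pow_sum)
    also have "\<dots> = 0"
    proof (rule sum.neutral, rule ballI)
      fix i assume "i \<in> {..degree g}"
      then have "f i \<le> N" unfolding N_def by (intro member_le_sum) auto
      then show "(E^^N) (monom (coeff g i) i) = 0" by (rule Ed.pow_mono[OF f])
    qed
    finally show ?thesis by blast
  qed
  have ELND: "is_LND (poly_K \<kappa>) E" using Eder Enil by (simp add: is_LND_def)
  have dz: "\<delta> b = 0" if H: "\<And>b n. E (monom b (n*k)) = monom (\<delta> b) (n*k + k)" for b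
  proof -
    have pw: "(E^^n) (monom b 0) = monom ((\<delta>^^n) b) (n*k)" for n b
      by (induction n) (simp_all add: H add.commute)
    have "is_LND \<kappa> \<delta>"
      unfolding is_LND_def
    proof (intro conjI allI dder)
      fix x
      obtain N where "(E^^N) (monom x 0) = 0" using Enil by blast
      then have "(\<delta>^^N) x = 0" using pw[of N x] by simp
      then show "\<exists>n. (\<delta>^^n) x = 0" by blast
    qed
    then have "\<delta> = (\<lambda>_. 0)" using rig by (simp add: rigid_def)
    then show ?thesis by simp
  qed
  have e0: "e = 0"
  proof (cases "k = 0")
    case True
    have H: "E (monom b (n*k)) = monom (\<delta> b) (n*k + k)" for b n
      using E_monom[of b "n*k"] True by (simp add: F_def)
    have dd: "\<delta> b = 0" for b by (rule dz) (rule H)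
    have E1: "E (monom b (Suc 0)) = monom (e * b) (Suc 0)" for b
      using E_monom[of b 1] True by (simp add: F_def dd mult.commute)
    have pw: "(E^^n) t = monom (e^n) 1" for n
      by (induction n) (simp_all add: t_def E1)
    obtain N where "(E^^N) t = 0" using Enil by blast
    then have "e^N = 0" using pw[of N] by simp
    then show ?thesis by (rule red)
  next
    case False
    then have k1: "1 \<le> k" by simp
    define p where "p n = coeff ((E^^n) t) (1 + n*k)" for n
    have Et: "(E^^n) t = monom (p n) (1 + n*k)" for n
      unfolding p_def t_def using EM[of n 1 1] by simp
    have p1: "p 1 = e"
    proof -
      have "E t = monom (F 1 1) (1 + k)" unfolding t_def by (rule E_monom)
      then show ?thesis by (simp add: p_def F_def d1)
    qed
    obtain N0 where N0: "(E^^N0) t = 0" using Enil by blast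
    show ?thesis
    proof (cases "N0 \<le> 1")
      case True
      have "(E^^1) t = 0" by (rule Ed.pow_mono[OF N0 True])
      then have "p 1 = 0" by (simp add: p_def)
      then show ?thesis using p1 by simp
    next
      case False
      then have N01: "1 < N0" by simp
      define U where "U l = (\<Sum>n<N0. poly_K \<kappa> (l^n / fact n) * monom (p n) (n*k))" for l
      have exp_t: "Ed.exN N0 l t = t * U l" for l
        unfolding Ed.exN_def U_def Et sum_distrib_left
        by (rule sum.cong[OF refl]) (simp add: t_def poly_K_mult mult_monom)
      have htu: "(E^^N0) (t * U 1) = 0"
      proof -
        have "(E^^N0) (t * U 1) = (\<Sum>n<N0. poly_K \<kappa> (1^n / fact n) * (E^^(N0+n)) t)"
          unfolding exp_t[symmetric] Ed.exN_def Ed.pow_sum Ed.pow_lin Ed.pow_comp ..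
        also have "\<dots> = 0"
          using Ed.pow_mono[OF N0] by (intro sum.neutral) simp
        finally show ?thesis .
      qed
      obtain N2 where N2: "(E^^N2) (U 1) = 0" using Enil by blast
      have "t = Ed.exN N0 0 t" by (rule Ed.exN_zero[OF N0, symmetric])
      also have "\<dots> = Ed.exN N0 (-1) (Ed.exN N0 1 t)" using Ed.exN_comp[OF N0, of "-1" 1] by simp
      also have "\<dots> = Ed.exN N0 (-1) (t * U 1)" by (simp add: exp_t)
      also have "\<dots> = Ed.exN (N0+N2) (-1) (t * U 1)" by (rule Ed.exN_indep[OF htu, symmetric]) simp
      also have "\<dots> = Ed.exN N0 (-1) t * Ed.exN N2 (-1) (U 1)" by (rule Ed.exN_mult[OF N0 N2])
      also have "\<dots> = t * (U (-1) * Ed.exN N2 (-1) (U 1))" by (simp add: exp_t mult.assoc)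
      finally have "monom 1 1 * 1 = monom 1 1 * (U (-1) * Ed.exN N2 (-1) (U 1))" by (simp add: t_def)
      then have uw: "U (-1) * Ed.exN N2 (-1) (U 1) = 1" by (rule t_cancel[symmetric])
      have "degree (U (-1)) = 0" by (rule unit_poly_deg0[OF red uw])
      then have c0: "coeff (U (-1)) k = 0" using k1 by (simp add: coeff_eq_0)
      have "coeff (U (-1)) k = (\<Sum>n<N0. \<kappa> ((-1)^n / fact n) * (if n*k = k then p n else 0))"
        by (simp add: U_def coeff_sum poly_K_mult coeff_monom)
      also have "\<dots> = (\<Sum>n\<in>{1}. \<kappa> ((-1)^n / fact n) * (if n*k = k then p n else 0))"
        by (rule sum.mono_neutral_right) (use N01 k1 in auto)
      also have "\<dots> = - p 1" by (simp add: rh_neg[OF \<kappa>] rh_1[OF \<kappa>])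
      finally have "p 1 = 0" using c0 by simp
      then show ?thesis using p1 by simp
    qed
  qed
  have H: "E (monom b (n*k)) = monom (\<delta> b) (n*k + k)" for b n
    using E_monom[of b "n*k"] e0 by (simp add: F_def)
  have "\<delta> r1 = 0" by (rule dz) (rule H)
  then show False using attain e0 by simp
qed

end



lemma vdm:
  fixes \<sigma> :: "'k::field_char_0 \<Rightarrow> 'r::comm_ring_1"
  assumes s: "rh \<sigma>"
  shows "(\<forall>l. (\<Sum>n<N. \<sigma> l ^ n * h n) = 0) \<Longrightarrow> n < N \<Longrightarrow> h n = 0"
proof (induction N arbitrary: h n)
  case 0 then show ?case by simp
next
  case (Suc N)
  define h' where "h' i = \<sigma> (2^i - 2^N) * h i" for i
  have "\<forall>l. (\<Sum>i<N. \<sigma> l ^ i * h' i) = 0"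
  proof
    fix l
    have A: "(\<Sum>n<Suc N. \<sigma> (2*l) ^ n * h n) = 0" and B: "(\<Sum>n<Suc N. \<sigma> l ^ n * h n) = 0"
      using Suc.prems(1) by blast+
    have "(\<Sum>n<Suc N. \<sigma> (2*l) ^ n * h n) - \<sigma> 2 ^ N * (\<Sum>n<Suc N. \<sigma> l ^ n * h n) =
        (\<Sum>n<Suc N. \<sigma> l ^ n * h' n)"
      unfolding sum_distrib_left sum_subtractf[symmetric]
      by (rule sum.cong[OF refl])
         (simp add: h'_def rh_diff[OF s] rh_pow[OF s] rh_mult[OF s] power_mult_distrib algebra_simps)
    also have "\<dots> = (\<Sum>n<N. \<sigma> l ^ n * h' n)"
      by (simp add: h'_def rh_0[OF s])
    finally show "(\<Sum>i<N. \<sigma> l ^ i * h' i) = 0" using A B by simp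
  qed
  then have h'0: "i < N \<Longrightarrow> h' i = 0" for i using Suc.IH by blast
  have hl: "i < N \<Longrightarrow> h i = 0" for i
  proof -
    assume i: "i < N"
    have ne: "(2::'k)^i - 2^N \<noteq> 0"
    proof
      assume "(2::'k)^i - 2^N = 0"
      then have "(of_nat (2^i) :: 'k) = of_nat (2^N)" by simp
      then have "(2::nat)^i = 2^N" by (simp only: of_nat_eq_iff)
      then show False using i by simp
    qed
    have "h i = \<sigma> (1 / (2^i - 2^N)) * h' i"
      using rh_inv'[OF s ne] by (simp add: h'_def mult.assoc[symmetric])
    then show "h i = 0" using h'0[OF i] by simp
  qed
  show ?case
  proof (cases "n < N")
    case True then show ?thesis by (rule hl)
  next
    case False
    with Suc.prems have n: "n = N" by simp
    have "(\<Sum>n<Suc N. \<sigma> 1 ^ n * h n) = 0" using Suc.prems(1) by blast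
    then have "h N + (\<Sum>n<N. h n) = 0" by (simp add: rh_1[OF s] add.commute)
    then show ?thesis using hl n by simp
  qed
qed

theorem corollary5:
  fixes emb :: "'k::field_char_0 \<Rightarrow> 'a::idom"
    and \<pi> :: "'a \<Rightarrow> 'v::comm_ring_1"
  assumes K_alg_closed: "alg_closed_field TYPE('k)"
    and Y_K_alg: "K_structure emb"
    and Y_fg: "finitely_generated_alg emb"
    and \<pi>_add: "\<And>x y. \<pi> (x + y) = \<pi> x + \<pi> y"
    and \<pi>_mult: "\<And>x y. \<pi> (x * y) = \<pi> x * \<pi> y"
    and \<pi>_one: "\<pi> 1 = 1"
    and \<pi>_surj: "surj \<pi>"
    and V_reduced: "\<And>(x::'v) (n::nat). x ^ n = 0 \<Longrightarrow> x = 0"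
    and V_nonempty: "(1::'v) \<noteq> 0"
    and V_rigid: "rigid (\<pi> \<circ> emb)"
    and V_invariant: "\<And>D s f. is_LND (poly_K emb) D \<Longrightarrow> map_poly \<pi> f = 0
                        \<Longrightarrow> map_poly \<pi> (lnd_exp (poly_K emb) D s f) = 0"
  shows "HD_star (poly_K emb) \<noteq> UNIV"
proof -
  have re: "rh emb" using Y_K_alg by (simp add: rh_K)
  have rp: "rh \<pi>" using \<pi>_add \<pi>_mult \<pi>_one by (simp add: rh_def)
  define \<kappa> where "\<kappa> = \<pi> \<circ> emb"
  have rk: "rh \<kappa>" unfolding \<kappa>_def by (rule rh_comp[OF re rp])
  define \<Pi> where "\<Pi> = map_poly \<pi>"
  have rP: "rh \<Pi>" unfolding \<Pi>_def by (rule rh_map_poly[OF rp])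
  have p0: "\<pi> 0 = 0" by (rule rh_0[OF rp])
  have Pc: "\<Pi> (poly_K emb a) = poly_K \<kappa> a" for a
    by (simp add: \<Pi>_def poly_K_def \<kappa>_def map_poly_pCons p0)
  have Pconst: "\<Pi> [:b:] = [:\<pi> b:]" for b by (simp add: \<Pi>_def map_poly_pCons p0)
  have Psurj: "\<exists>f. \<Pi> f = g" for g
  proof -
    define \<rho> where "\<rho> x = (if x = 0 then 0 else inv \<pi> x)" for x
    have \<rho>0: "\<rho> 0 = 0" by (simp add: \<rho>_def)
    have \<pi>\<rho>: "\<pi> (\<rho> x) = x" for x
      using \<pi>_surj p0 by (simp add: \<rho>_def surj_f_inv_f)
    have "\<Pi> (map_poly \<rho> g) = g"
      by (rule poly_eqI) (simp add: \<Pi>_def coeff_map_poly \<rho>0 p0 \<pi>\<rho>)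
    then show ?thesis by blast
  qed
  have claim: "degree (\<Pi> x) = 0" if D: "is_LND (poly_K emb) D" and sl: "D s = 1" and x: "D x = 0" for D s x
  proof -
    interpret Dd: der "poly_K emb" D using D poly_K_rh[OF re] by (simp add: der_def is_LND_def)
    have nil: "\<exists>n. (D^^n) f = 0" for f using D by (simp add: is_LND_def)
    have pres: "\<Pi> (D f) = 0" if f: "\<Pi> f = 0" for f
    proof -
      define L where "L = (LEAST m. (D^^m) f = 0)"
      have L: "(D^^L) f = 0" unfolding L_def by (rule LeastI_ex[OF nil])
      define \<sigma> where "\<sigma> = \<Pi> \<circ> poly_K emb"
      have rs: "rh \<sigma>" unfolding \<sigma>_def by (rule rh_comp[OF poly_K_rh[OF re] rP])
      define h where "h n = \<sigma> (1 / fact n) * \<Pi> ((D^^n) f)" for n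
      have "\<forall>l. (\<Sum>n<L. \<sigma> l ^ n * h n) = 0"
      proof
        fix l
        have "\<Pi> (lnd_exp (poly_K emb) D l f) = 0"
          using V_invariant[OF D] f by (simp add: \<Pi>_def)
        moreover have "\<Pi> (lnd_exp (poly_K emb) D l f) = (\<Sum>n<L. \<sigma> l ^ n * h n)"
          unfolding lnd_exp_def L_def[symmetric] rh_sum[OF rP]
        proof (rule sum.cong[OF refl])
          fix n
          have "\<sigma> (l^n / fact n) = \<sigma> l ^ n * \<sigma> (1 / fact n)"
            using rh_mult[OF rs, of "l^n" "1 / fact n"] rh_pow[OF rs, of l n] by simp
          then show "\<Pi> (poly_K emb (l ^ n / fact n) * (D ^^ n) f) = \<sigma> l ^ n * h n"
            by (simp add: rh_mult[OF rP] h_def mult.assoc \<sigma>_def)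
        qed
        ultimately show "(\<Sum>n<L. \<sigma> l ^ n * h n) = 0" by simp
      qed
      note V = vdm[OF rs this]
      show ?thesis
      proof (cases "1 < L")
        case True
        have "h 1 = 0" by (rule V[OF True])
        then show ?thesis by (simp add: h_def rh_1[OF rs])
      next
        case False
        have "(D^^1) f = 0" using False by (intro Dd.pow_mono[OF L]) simp
        then show ?thesis by (simp add: rh_0[OF rP])
      qed
    qed
    have wd: "\<Pi> (D f1) = \<Pi> (D f2)" if "\<Pi> f1 = \<Pi> f2" for f1 f2
    proof -
      have "\<Pi> (f1 - f2) = 0" using that by (simp add: rh_diff[OF rP])
      then have "\<Pi> (D (f1 - f2)) = 0" by (rule pres)
      then show ?thesis by (simp add: Dd.diff rh_diff[OF rP])
    qed
    define pre where "pre g = (SOME f. \<Pi> f = g)" for g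
    have pre: "\<Pi> (pre g) = g" for g unfolding pre_def by (rule someI_ex[OF Psurj])
    define Dv where "Dv g = \<Pi> (D (pre g))" for g
    have Dv: "Dv (\<Pi> f) = \<Pi> (D f)" for f unfolding Dv_def by (rule wd) (simp add: pre)
    have Dvpow: "(Dv^^n) (\<Pi> f) = \<Pi> ((D^^n) f)" for n f
      by (induction n) (simp_all add: Dv)
    have Dvder: "is_derivation (poly_K \<kappa>) Dv"
      unfolding is_derivation_def
    proof (intro conjI allI)
      fix x y
      show "Dv (x + y) = Dv x + Dv y"
        using Dv[of "pre x + pre y"] by (simp add: rh_add[OF rP] pre Dd.add Dv_def)
      show "Dv (x * y) = x * Dv y + y * Dv x"
        using Dv[of "pre x * pre y"] by (simp add: rh_mult[OF rP] rh_add[OF rP] pre Dd.leib Dv_def)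
    next
      fix a x
      show "Dv (poly_K \<kappa> a * x) = poly_K \<kappa> a * Dv x"
        using Dv[of "poly_K emb a * pre x"] by (simp add: rh_mult[OF rP] Pc pre Dd.lin Dv_def)
    qed
    have DvLND: "is_LND (poly_K \<kappa>) Dv"
      unfolding is_LND_def
    proof (intro conjI allI Dvder)
      fix g
      obtain n where "(D^^n) (pre g) = 0" using nil by blast
      then have "(Dv^^n) g = 0" using Dvpow[of n "pre g"] by (simp add: pre rh_0[OF rP])
      then show "\<exists>n. (Dv^^n) g = 0" by blast
    qed
    obtain G where G: "finite G" "alg_gen emb G = UNIV" using Y_fg by (auto simp: finitely_generated_alg_def)
    define M where "M = Max (insert 0 ((\<lambda>g. degree (D [:g:])) ` G))"
    have Mb: "b \<in> alg_gen emb G \<Longrightarrow> degree (D [:b:]) \<le> M" for b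
    proof (induction rule: alg_gen.induct)
      case (scalar a)
      have "D [:emb a:] = 0" using Dd.const[of a] by (simp add: poly_K_def)
      then show ?case by simp
    next
      case (gen g)
      then show ?case using G(1) by (auto simp: M_def intro: Max_ge)
    next
      case (add x y)
      have "D [:x + y:] = D [:x:] + D [:y:]" using Dd.add[of "[:x:]" "[:y:]"] by simp
      then show ?case using add.IH degree_add_le[of "D [:x:]" M "D [:y:]"] by simp
    next
      case (mult x y)
      have "D [:x * y:] = smult x (D [:y:]) + smult y (D [:x:])"
        using Dd.leib[of "[:x:]" "[:y:]"] by (simp add: mult.commute)
      then show ?case using mult.IH degree_add_le[of "smult x (D [:y:])" M "smult y (D [:x:])"]
          degree_smult_le[of x "D [:y:]"] degree_smult_le[of y "D [:x:]"] by simp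
    qed
    have bnd: "degree (Dv [:r:]) \<le> M" for r
    proof -
      obtain b where b: "r = \<pi> b" using \<pi>_surj by (metis surjD)
      have "Dv [:r:] = \<Pi> (D [:b:])" using Dv[of "[:b:]"] by (simp add: Pconst b)
      moreover have "degree (\<Pi> (D [:b:])) \<le> degree (D [:b:])"
        unfolding \<Pi>_def by (rule degree_le) (simp add: coeff_map_poly p0 coeff_eq_0)
      ultimately have "degree (Dv [:r:]) \<le> degree (D [:b:])" by simp
      also have "\<dots> \<le> M" using Mb G(2) by simp
      finally show ?thesis .
    qed
    interpret kc: keyctx \<kappa> Dv M
      by unfold_locales (use rk DvLND V_reduced V_rigid bnd in \<open>simp_all add: \<kappa>_def\<close>)
    have dd: "der (poly_K \<kappa>) Dv" using rk Dvder poly_K_rh[OF rk] by (simp add: der_def)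
    have s1: "Dv (\<Pi> s) = 1" using Dv[of s] sl by (simp add: rh_1[OF rP])
    have x1: "Dv (\<Pi> x) = 0" using Dv[of x] x by (simp add: rh_0[OF rP])
    have cst: "\<And>r. Dv [:r:] = 0" by (rule kc.key)
    show ?thesis by (rule slice_const[OF dd cst V_reduced s1 x1])
  qed
  have HD: "x \<in> HD_star (poly_K emb) \<Longrightarrow> degree (\<Pi> x) = 0" for x
    unfolding HD_star_def
  proof (induction rule: alg_gen.induct)
    case (scalar a) show ?case by (simp only: Pc) (simp add: poly_K_def)
  next
    case (gen g) then show ?case using claim by blast
  next
    case (add x y) then show ?case using degree_add_le[of "\<Pi> x" 0 "\<Pi> y"] by (simp add: rh_add[OF rP])
  next
    case (mult x y) then show ?case using degree_mult_le[of "\<Pi> x" "\<Pi> y"] by (simp add: rh_mult[OF rP])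
  qed
  show ?thesis
  proof
    assume "HD_star (poly_K emb) = UNIV"
    then have "degree (\<Pi> [:0, 1:]) = 0" using HD by blast
    moreover have "\<Pi> [:0, 1:] = [:0, 1:]" by (simp add: \<Pi>_def map_poly_pCons p0 \<pi>_one)
    ultimately show False using V_nonempty by simp
  qed
qed

end
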